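(* Let $I\subset C_+$ be a closed interval (arc) and suppose that either ($-$) the first positive hitting time of points of $I$ with $S_-$ defines a continuous function $\tau:I\to\mathbb{R}_{>0}$ and for every $q\in I$ the flow line $Fl_t(q)$ intersects $S_-$ transversely at $t=\tau(q)$, or ($+$) the same holds with $S_+$ in place of $S_-$. Let $h(q)=Fl_{\tau(q)}(q)$ and define the slope function $s_I=\mathrm{pr}_{w_2}\circ h$ in case ($-$) and $s_I=\mathrm{pr}_{w_1}\circ h$ in case ($+$). If $s_I(p_0)=0$ for some $p_0\in I$, then $p_0$ is the initial point of a symmetric periodic orbit.
   Context: Levi-Civita regularized restricted three-body problem: on $\mathbb{R}^4=\{(z_1,z_2,w_1,w_2)\}$ with symplectic form $dw\wedge dz$, $K_{\mu,c}=\tfrac12|w|^2+c|z|^2-\tfrac{1-\mu}{2}+2|z|^2(z_1w_2-z_2w_1)-\mu(z_1w_2+z_2w_1)-\frac{\mu|z|^2}{|2z^2-1|}$ (complex notation $z=z_1+iz_2$), with $-c$ below the smallest critical value of the Jacobi Hamiltonian; $\Sigma_{\mu,c}$ is the compact component of $K_{\mu,c}^{-1}(0)$ containing $\{z=0\}$ and $Fl_t$ the flow of $X_{K_{\mu,c}}$ on it. $R_+(z,w)=(\bar z,-\bar w)$, $R_-(z,w)=(-\bar z,\bar w)$ are anti-symplectic involutions preserving $K_{\mu,c}$; $C_\pm=\mathrm{Fix}(R_\pm)\cap\Sigma_{\mu,c}$, so $C_+=\{z_2=0,w_1=0\}\cap\Sigma_{\mu,c}$, $C_-=\{z_1=0,w_2=0\}\cap\Sigma_{\mu,c}$.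 $S_+=\{z_2=0\}\cap\Sigma_{\mu,c}$, $S_-=\{z_1=0\}\cap\Sigma_{\mu,c}$. A $T$-periodic orbit $\gamma$ is symmetric if, for some $R\in\{R_+,R_-\}$ and after a time shift, $R(\gamma(T-t))=\gamma(t)$. *)

theory Defs
  imports "HOL-Analysis.Analysis"
begin

text \<open>Phase space R^4 with coordinates (z1,z2,w1,w2) = (x$1, x$2, x$3, x$4).\<close>

definition zc :: "real^4 \<Rightarrow> complex" where
  "zc x = Complex (x$1) (x$2)"

definition K :: "real \<Rightarrow> real \<Rightarrow> real^4 \<Rightarrow> real" where
  "K \<mu> c x =
     (let z1 = x$1; z2 = x$2; w1 = x$3; w2 = x$4; r = z1^2 + z2^2 in
      (w1^2 + w2^2) / 2 + c * r - (1 - \<mu>) / 2 + 2 * r * (z1 * w2 - z2 * w1)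
      - \<mu> * (z1 * w2 + z2 * w1) - \<mu> * r / cmod (2 * (zc x)^2 - 1))"

definition LC_level :: "real \<Rightarrow> real \<Rightarrow> (real^4) set" where
  "LC_level \<mu> c = {x. 2 * (zc x)^2 \<noteq> 1 \<and> K \<mu> c x = 0}"

definition Sigma :: "real \<Rightarrow> real \<Rightarrow> (real^4) set" where
  "Sigma \<mu> c = \<Union>{connected_component_set (LC_level \<mu> c) x | x.
                    x \<in> LC_level \<mu> c \<and> x$1 = 0 \<and> x$2 = 0}"

definition pd :: "(real^4 \<Rightarrow> real) \<Rightarrow> 4 \<Rightarrow> real^4 \<Rightarrow> real" where
  "pd f i x = deriv (\<lambda>s. f (x + s *\<^sub>R axis i 1)) 0"

text \<open>Hamiltonian vector field of K for the symplectic form dw /\ dz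
  (convention: dz/dt = dK/dw, dw/dt = - dK/dz).\<close>
definition XK :: "real \<Rightarrow> real \<Rightarrow> real^4 \<Rightarrow> real^4" where
  "XK \<mu> c x = vector [pd (K \<mu> c) 3 x, pd (K \<mu> c) 4 x, - pd (K \<mu> c) 1 x, - pd (K \<mu> c) 2 x]"

definition is_flow :: "real \<Rightarrow> real \<Rightarrow> (real \<Rightarrow> real^4 \<Rightarrow> real^4) \<Rightarrow> bool" where
  "is_flow \<mu> c Fl \<longleftrightarrow>
     (\<forall>q \<in> Sigma \<mu> c. Fl 0 q = q \<and>
        (\<forall>t. ((\<lambda>s. Fl s q) has_vector_derivative XK \<mu> c (Fl t q)) (at t)))"

text \<open>Jacobi Hamiltonian of the rotating Kepler/restricted three-body problem
  (earth of mass 1-mu at 0, moon of mass mu at (1,0)), coordinates (q1,q2,p1,p2);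
  K = |z|^2 (H o L + c) for the Levi-Civita map L(z,w) = (2 z^2, w / conj z).\<close>
definition Hjac :: "real \<Rightarrow> real^4 \<Rightarrow> real" where
  "Hjac \<mu> x =
     (let q1 = x$1; q2 = x$2; p1 = x$3; p2 = x$4 in
      (p1^2 + p2^2) / 2 - (1 - \<mu>) / sqrt (q1^2 + q2^2) - \<mu> / sqrt ((q1 - 1)^2 + q2^2)
      + q1 * p2 - q2 * p1 - \<mu> * p2)"

definition Hjac_domain :: "(real^4) set" where
  "Hjac_domain = {x. (x$1, x$2) \<noteq> (0, 0) \<and> (x$1, x$2) \<noteq> (1, 0)}"

definition below_critical :: "real \<Rightarrow> real \<Rightarrow> bool" where
  "below_critical \<mu> c \<longleftrightarrow>
     (\<forall>x \<in> Hjac_domain. (Hjac \<mu> has_derivative (\<lambda>v. 0)) (at x) \<longrightarrow> - c < Hjac \<mu> x)"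

definition Rplus :: "real^4 \<Rightarrow> real^4" where
  "Rplus x = vector [x$1, - x$2, - x$3, x$4]"

definition Rminus :: "real^4 \<Rightarrow> real^4" where
  "Rminus x = vector [- x$1, x$2, x$3, - x$4]"

definition C_plus :: "real \<Rightarrow> real \<Rightarrow> (real^4) set" where
  "C_plus \<mu> c = {x \<in> Sigma \<mu> c. x$2 = 0 \<and> x$3 = 0}"

definition S_plus :: "real \<Rightarrow> real \<Rightarrow> (real^4) set" where
  "S_plus \<mu> c = {x \<in> Sigma \<mu> c. x$2 = 0}"

definition S_minus :: "real \<Rightarrow> real \<Rightarrow> (real^4) set" where
  "S_minus \<mu> c = {x \<in> Sigma \<mu> c. x$1 = 0}"

text \<open>tau is the first positive hitting time of I with S (= Sigma \<inter> {x$k = 0}),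
  continuous on I, and the flow line crosses S transversely there
  (the k-th component of X_K at the hitting point is nonzero).\<close>
definition first_hit_transverse ::
  "real \<Rightarrow> real \<Rightarrow> (real \<Rightarrow> real^4 \<Rightarrow> real^4) \<Rightarrow> (real^4) set \<Rightarrow> 4
     \<Rightarrow> (real^4) set \<Rightarrow> (real^4 \<Rightarrow> real) \<Rightarrow> bool" where
  "first_hit_transverse \<mu> c Fl S k I \<tau> \<longleftrightarrow>
     continuous_on I \<tau> \<and>
     (\<forall>q \<in> I. 0 < \<tau> q \<and> Fl (\<tau> q) q \<in> S \<and>
        (\<forall>t. 0 < t \<and> t < \<tau> q \<longrightarrow> Fl t q \<notin> S) \<and>
        XK \<mu> c (Fl (\<tau> q) q) $ k \<noteq> 0)"

definition symmetric_periodic_point ::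
  "(real \<Rightarrow> real^4 \<Rightarrow> real^4) \<Rightarrow> real^4 \<Rightarrow> bool" where
  "symmetric_periodic_point Fl p \<longleftrightarrow>
     (\<exists>T > 0. (\<forall>t. Fl (t + T) p = Fl t p) \<and>
        (\<exists>R \<in> {Rplus, Rminus}. \<exists>s. \<forall>t. R (Fl (T - t + s) p) = Fl (t + s) p))"

end

theory Submission
  imports Defs
begin


lemma vector_4 [simp]:
 "(vector [x,y,z,w] ::('a::zero)^4)$1 = x"
 "(vector [x,y,z,w] ::('a::zero)^4)$2 = y"
 "(vector [x,y,z,w] ::('a::zero)^4)$3 = z"
 "(vector [x,y,z,w] ::('a::zero)^4)$4 = w"
  unfolding vector_def by simp_all

lemma idx_distinct: "(1::4) \<noteq> 2" "(1::4) \<noteq> 3" "(1::4) \<noteq> 4" "(2::4) \<noteq> 3" "(2::4) \<noteq> 4" "(3::4) \<noteq> 4"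
  by simp_all

definition NN :: "real^4 \<Rightarrow> real" where
  "NN x = (2*(x$1)^2 - 2*(x$2)^2 - 1)^2 + 16*(x$1)^2*(x$2)^2"

lemma cmod_eq: "cmod (2 * (zc x)^2 - 1) = sqrt (NN x)"
  by (simp add: zc_def NN_def cmod_def power2_eq_square algebra_simps)



definition rr :: "real^4 \<Rightarrow> real" where "rr x = (x$1)^2 + (x$2)^2"
definition iS :: "real^4 \<Rightarrow> real" where "iS x = inverse (sqrt (NN x))"
definition PP :: "real \<Rightarrow> real \<Rightarrow> real^4 \<Rightarrow> real" where
 "PP \<mu> c x = ((x$3)^2 + (x$4)^2) / 2 + c * rr x - (1 - \<mu>) / 2
     + 2 * rr x * (x$1 * x$4 - x$2 * x$3) - \<mu> * (x$1 * x$4 + x$2 * x$3)"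

lemma K_eq: "K \<mu> c x = PP \<mu> c x - \<mu> * rr x * iS x"
  unfolding K_def PP_def rr_def iS_def Let_def cmod_eq divide_inverse
  by (rule refl)

definition Na :: "real^4 \<Rightarrow> real" where "Na x = 8*x$1*(2*(x$1)^2 - 2*(x$2)^2 - 1) + 32*x$1*(x$2)^2"
definition Nb :: "real^4 \<Rightarrow> real" where "Nb x = -8*x$2*(2*(x$1)^2 - 2*(x$2)^2 - 1) + 32*(x$1)^2*x$2"

definition P1 where "P1 \<mu> c x = 2*c*x$1 + 4*x$1*(x$1*x$4 - x$2*x$3) + 2*rr x*x$4 - \<mu>*x$4"
definition P2 where "P2 \<mu> c x = 2*c*x$2 + 4*x$2*(x$1*x$4 - x$2*x$3) - 2*rr x*x$3 - \<mu>*x$3"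
definition g3 where "g3 \<mu> x = x$3 - 2*rr x*x$2 - \<mu>*x$2"
definition g4 where "g4 \<mu> x = x$4 + 2*rr x*x$1 - \<mu>*x$1"
definition dS1 where "dS1 x = - (iS x ^ 3 / 2) * Na x"
definition dS2 where "dS2 x = - (iS x ^ 3 / 2) * Nb x"
definition g1 where "g1 \<mu> c x = P1 \<mu> c x - \<mu> * (2 * x$1 * iS x + rr x * dS1 x)"
definition g2 where "g2 \<mu> c x = P2 \<mu> c x - \<mu> * (2 * x$2 * iS x + rr x * dS2 x)"

lemma NN_nonneg: "NN x \<ge> 0"
  unfolding NN_def by simp

lemma has_derivative_nth[derivative_intros]: "((\<lambda>x::real^4. x $ i) has_derivative (\<lambda>v. v $ i)) F"
  by (rule bounded_linear_imp_has_derivative) (rule bounded_linear_vec_nth)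

lemma NN_deriv: "(NN has_derivative (\<lambda>v. Na x * v$1 + Nb x * v$2)) (at x)"
  unfolding NN_def Na_def Nb_def
  apply (rule derivative_eq_intros refl)+
  apply (simp add: algebra_simps power2_eq_square)
  done

lemma rr_deriv: "(rr has_derivative (\<lambda>v. 2 * x$1 * v$1 + 2 * x$2 * v$2)) (at x)"
  unfolding rr_def
  apply (rule derivative_eq_intros refl)+
  apply (simp add: algebra_simps)
  done

lemma PP_alt: "PP \<mu> c x = (1/2) * ((x$3)^2 + (x$4)^2) + c * ((x$1)^2 + (x$2)^2) - (1 - \<mu>) / 2
     + 2 * ((x$1)^2 + (x$2)^2) * (x$1 * x$4 - x$2 * x$3) - \<mu> * (x$1 * x$4 + x$2 * x$3)"
  unfolding PP_def rr_def by simp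
lemma PP_deriv: "(PP \<mu> c has_derivative (\<lambda>v. P1 \<mu> c x * v$1 + P2 \<mu> c x * v$2 + g3 \<mu> x * v$3 + g4 \<mu> x * v$4)) (at x)"
  unfolding PP_alt[abs_def]
  apply (rule derivative_eq_intros refl)+
  apply (rule ext)
  apply (simp add: P1_def P2_def g3_def g4_def rr_def algebra_simps power2_eq_square)
  done

lemma iS_deriv:
  assumes "NN x \<noteq> 0"
  shows "(iS has_derivative (\<lambda>v. dS1 x * v$1 + dS2 x * v$2)) (at x)"
proof -
  have Np: "NN x > 0" using assms NN_nonneg[of x] by linarith
  define s where "s = sqrt (NN x)"
  have sq: "s > 0" using Np s_def by simp
  have d1: "(sqrt has_derivative (*) (inverse s / 2)) (at (NN x))"
    using DERIV_real_sqrt[OF Np] unfolding has_field_derivative_def s_def .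
  have d2: "(inverse has_derivative (*) (- (inverse s ^ 2))) (at (sqrt (NN x)))"
    using DERIV_inverse[of s] sq unfolding has_field_derivative_def s_def by (simp add: power2_eq_square)
  have c1: "((\<lambda>y. sqrt (NN y)) has_derivative (\<lambda>v. (inverse s / 2) * (Na x * v$1 + Nb x * v$2))) (at x)"
    using has_derivative_compose[OF NN_deriv d1] .
  have c2: "((\<lambda>y. inverse (sqrt (NN y))) has_derivative (\<lambda>v. (- (inverse s ^ 2)) * ((inverse s / 2) * (Na x * v$1 + Nb x * v$2)))) (at x)"
    using has_derivative_compose[OF c1 d2] .
  have e: "(\<lambda>v. (- (inverse s ^ 2)) * ((inverse s / 2) * (Na x * v$1 + Nb x * v$2))) = (\<lambda>v. dS1 x * v$1 + dS2 x * v$2)"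
    unfolding dS1_def dS2_def iS_def s_def[symmetric]
    by (rule ext) (simp add: power3_eq_cube power2_eq_square algebra_simps)
  show ?thesis using c2 unfolding e iS_def[abs_def] .
qed

lemma K_deriv:
  assumes "NN x \<noteq> 0"
  shows "(K \<mu> c has_derivative (\<lambda>v. g1 \<mu> c x * v$1 + g2 \<mu> c x * v$2 + g3 \<mu> x * v$3 + g4 \<mu> x * v$4)) (at x)"
proof -
  have "((\<lambda>x. PP \<mu> c x - \<mu> * rr x * iS x) has_derivative (\<lambda>v. g1 \<mu> c x * v$1 + g2 \<mu> c x * v$2 + g3 \<mu> x * v$3 + g4 \<mu> x * v$4)) (at x)"
    apply (rule derivative_eq_intros refl PP_deriv rr_deriv iS_deriv[OF assms])+
    apply (rule ext)
    apply (simp only: g1_def g2_def)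
    apply (simp add: algebra_simps)
    done
  then show ?thesis unfolding K_eq[abs_def] by simp
qed


definition good :: "(real^4) set \<Rightarrow> (real^4 \<Rightarrow> real) \<Rightarrow> bool" where
 "good S f \<longleftrightarrow> (\<exists>B. \<forall>x\<in>S. \<bar>f x\<bar> \<le> B) \<and> (\<exists>L. \<forall>x\<in>S. \<forall>y\<in>S. \<bar>f x - f y\<bar> \<le> L * norm (x - y))"

lemma good_const: "good S (\<lambda>x. k)"
  unfolding good_def by (intro conjI exI[of _ "\<bar>k\<bar>"] exI[of _ 0]) auto

lemma good_nth: assumes "bounded S" shows "good S (\<lambda>x. x $ i)"
proof -
  obtain B where B: "\<forall>x\<in>S. norm x \<le> B" using assms bounded_iff by blast
  have "\<forall>x\<in>S. \<bar>x $ i\<bar> \<le> B" using B component_le_norm_cart order_trans by blast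
  moreover have "\<forall>x\<in>S. \<forall>y\<in>S. \<bar>x $ i - y $ i\<bar> \<le> 1 * norm (x - y)"
    by (metis component_le_norm_cart mult_1 vector_minus_component)
  ultimately show ?thesis unfolding good_def by blast
qed

lemma good_add: "good S f \<Longrightarrow> good S g \<Longrightarrow> good S (\<lambda>x. f x + g x)"
  unfolding good_def
proof (elim conjE exE, intro conjI)
  fix B1 L1 B2 L2
  assume a: "\<forall>x\<in>S. \<bar>f x\<bar> \<le> B1" "\<forall>x\<in>S. \<forall>y\<in>S. \<bar>f x - f y\<bar> \<le> L1 * norm (x - y)"
     "\<forall>x\<in>S. \<bar>g x\<bar> \<le> B2" "\<forall>x\<in>S. \<forall>y\<in>S. \<bar>g x - g y\<bar> \<le> L2 * norm (x - y)"
  show "\<exists>B. \<forall>x\<in>S. \<bar>f x + g x\<bar> \<le> B"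
    by (rule exI[of _ "B1 + B2"]) (smt (verit) a)
  show "\<exists>L. \<forall>x\<in>S. \<forall>y\<in>S. \<bar>f x + g x - (f y + g y)\<bar> \<le> L * norm (x - y)"
    by (rule exI[of _ "L1 + L2"]) (smt (verit, best) a distrib_right)
qed

lemma good_neg: "good S f \<Longrightarrow> good S (\<lambda>x. - f x)"
  unfolding good_def by (smt (verit, best))

lemma good_diff: "good S f \<Longrightarrow> good S g \<Longrightarrow> good S (\<lambda>x. f x - g x)"
  using good_add[OF _ good_neg, of S f g] by simp

lemma good_mult: "good S f \<Longrightarrow> good S g \<Longrightarrow> good S (\<lambda>x. f x * g x)"
  unfolding good_def
proof (elim conjE exE, intro conjI)
  fix B1 L1 B2 L2
  assume a: "\<forall>x\<in>S. \<bar>f x\<bar> \<le> B1" "\<forall>x\<in>S. \<forall>y\<in>S. \<bar>f x - f y\<bar> \<le> L1 * norm (x - y)"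
     "\<forall>x\<in>S. \<bar>g x\<bar> \<le> B2" "\<forall>x\<in>S. \<forall>y\<in>S. \<bar>g x - g y\<bar> \<le> L2 * norm (x - y)"
  show "\<exists>B. \<forall>x\<in>S. \<bar>f x * g x\<bar> \<le> B"
    by (rule exI[of _ "B1 * B2"]) (simp add: a abs_mult mult_mono')
  show "\<exists>L. \<forall>x\<in>S. \<forall>y\<in>S. \<bar>f x * g x - f y * g y\<bar> \<le> L * norm (x - y)"
  proof (rule exI[of _ "B1 * L2 + B2 * L1"], intro ballI)
    fix x y assume xy: "x \<in> S" "y \<in> S"
    have e: "f x * g x - f y * g y = f x * (g x - g y) + g y * (f x - f y)" by algebra
    have 1: "\<bar>f x * (g x - g y)\<bar> \<le> B1 * (L2 * norm (x - y))"
      unfolding abs_mult using a xy by (simp add: mult_mono')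
    have 2: "\<bar>g y * (f x - f y)\<bar> \<le> B2 * (L1 * norm (x - y))"
      unfolding abs_mult using a xy by (simp add: mult_mono')
    show "\<bar>f x * g x - f y * g y\<bar> \<le> (B1 * L2 + B2 * L1) * norm (x - y)"
      unfolding e using 1 2 by (smt (verit, best) distrib_right mult.assoc)
  qed
qed

lemma inv_sqrt_lip:
  fixes a b d :: real
  assumes "0 < d" "d \<le> a" "d \<le> b"
  shows "\<bar>inverse (sqrt a) - inverse (sqrt b)\<bar> \<le> (inverse (2 * d * sqrt d)) * \<bar>a - b\<bar>"
proof -
  have sa: "sqrt d \<le> sqrt a" "sqrt d \<le> sqrt b" using assms by auto
  have pd: "sqrt d > 0" using assms by auto
  have pa: "sqrt a > 0" "sqrt b > 0" using sa pd by linarith+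
  have e1: "inverse (sqrt a) - inverse (sqrt b) = (sqrt b - sqrt a) / (sqrt a * sqrt b)"
    using pa by (simp add: field_simps)
  have "(sqrt b - sqrt a) * (sqrt a + sqrt b) = b - a"
    using assms by (simp add: algebra_simps)
  moreover have "sqrt a + sqrt b \<noteq> 0" using pa by linarith
  ultimately have e2: "sqrt b - sqrt a = (b - a) / (sqrt a + sqrt b)"
    by (simp add: eq_divide_eq)
  have "\<bar>inverse (sqrt a) - inverse (sqrt b)\<bar> = \<bar>a - b\<bar> / ((sqrt a + sqrt b) * (sqrt a * sqrt b))"
    using pa unfolding e1 e2 by (simp add: abs_div abs_minus_commute)
  also have "\<dots> \<le> \<bar>a - b\<bar> / ((sqrt d + sqrt d) * (sqrt d * sqrt d))"
  proof -
    have m1: "sqrt d + sqrt d \<le> sqrt a + sqrt b" using sa by linarith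
    have m2: "sqrt d * sqrt d \<le> sqrt a * sqrt b" using sa pd by (intro mult_mono) auto
    have "(sqrt d + sqrt d) * (sqrt d * sqrt d) \<le> (sqrt a + sqrt b) * (sqrt a * sqrt b)"
    proof (rule mult_mono[OF m1 m2])
      show "0 \<le> sqrt a + sqrt b" using pa by linarith
      show "0 \<le> sqrt d * sqrt d" using pd by simp
    qed
    moreover have "0 < (sqrt a + sqrt b) * (sqrt a * sqrt b) * ((sqrt d + sqrt d) * (sqrt d * sqrt d))"
      using pa pd by (intro mult_pos_pos add_pos_pos) auto
    ultimately show ?thesis by (intro divide_left_mono) auto
  qed
  also have "\<dots> = inverse (2 * d * sqrt d) * \<bar>a - b\<bar>"
    using assms by (simp add: field_simps)
  finally show ?thesis .
qed

lemma good_inv_sqrt: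
  assumes "good S f" "0 < d" "\<forall>x\<in>S. d \<le> f x"
  shows "good S (\<lambda>x. inverse (sqrt (f x)))"
proof -
  obtain L1 where a2: "\<forall>x\<in>S. \<forall>y\<in>S. \<bar>f x - f y\<bar> \<le> L1 * norm (x - y)"
    using assms(1) unfolding good_def by blast
  have "\<exists>B. \<forall>x\<in>S. \<bar>inverse (sqrt (f x))\<bar> \<le> B"
  proof (rule exI[of _ "inverse (sqrt d)"], intro ballI)
    fix x assume "x \<in> S"
    then have "d \<le> f x" using assms by auto
    then show "\<bar>inverse (sqrt (f x))\<bar> \<le> inverse (sqrt d)"
      using assms(2) by (simp add: le_imp_inverse_le)
  qed
  moreover have "\<exists>L. \<forall>x\<in>S. \<forall>y\<in>S. \<bar>inverse (sqrt (f x)) - inverse (sqrt (f y))\<bar> \<le> L * norm (x - y)"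
  proof (rule exI[of _ "inverse (2 * d * sqrt d) * L1"], intro ballI)
    fix x y assume xy: "x \<in> S" "y \<in> S"
    have "\<bar>inverse (sqrt (f x)) - inverse (sqrt (f y))\<bar> \<le> inverse (2 * d * sqrt d) * \<bar>f x - f y\<bar>"
      using inv_sqrt_lip assms xy by auto
    also have "\<dots> \<le> inverse (2 * d * sqrt d) * (L1 * norm (x - y))"
      using a2 xy assms(2) by (intro mult_left_mono) auto
    finally show "\<bar>inverse (sqrt (f x)) - inverse (sqrt (f y))\<bar> \<le> inverse (2 * d * sqrt d) * L1 * norm (x - y)"
      by (simp add: mult.assoc)
  qed
  ultimately show ?thesis unfolding good_def by blast
qed



definition GG :: "real \<Rightarrow> real \<Rightarrow> real^4 \<Rightarrow> real^4" where
  "GG \<mu> c x = vector [g3 \<mu> x, g4 \<mu> x, - g1 \<mu> c x, - g2 \<mu> c x]"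

lemma pd_K:
  assumes "NN x \<noteq> 0"
  shows "pd (K \<mu> c) i x = g1 \<mu> c x * (axis i 1 :: real^4)$1 + g2 \<mu> c x * (axis i 1 :: real^4)$2
      + g3 \<mu> x * (axis i 1 :: real^4)$3 + g4 \<mu> x * (axis i 1 :: real^4)$4"
    (is "_ = ?D")
proof -
  define e :: "real^4" where "e = axis i 1"
  have l: "((\<lambda>s. x + s *\<^sub>R e) has_derivative (\<lambda>s. s *\<^sub>R e)) (at 0)"
    by (rule derivative_eq_intros refl)+ simp
  have k: "(K \<mu> c has_derivative (\<lambda>v. g1 \<mu> c x * v$1 + g2 \<mu> c x * v$2 + g3 \<mu> x * v$3 + g4 \<mu> x * v$4)) (at (x + 0 *\<^sub>R e))"
    using K_deriv[OF assms] by simp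
  have "((\<lambda>s. K \<mu> c (x + s *\<^sub>R e)) has_derivative (\<lambda>s. s * ?D)) (at 0)"
    using has_derivative_compose[OF l k] unfolding e_def
    by (rule has_derivative_eq_rhs) (auto simp: algebra_simps)
  moreover have "(\<lambda>s. s * ?D) = (*) ?D" by (rule ext) (simp add: mult.commute)
  ultimately have "((\<lambda>s. K \<mu> c (x + s *\<^sub>R e)) has_real_derivative ?D) (at 0)"
    by (simp add: has_field_derivative_def)
  then show ?thesis unfolding pd_def e_def by (rule DERIV_imp_deriv)
qed

lemma axis_simps:
  "(axis 1 1 :: real^4)$1 = 1" "(axis 1 1 :: real^4)$2 = 0" "(axis 1 1 :: real^4)$3 = 0" "(axis 1 1 :: real^4)$4 = 0"
  "(axis 2 1 :: real^4)$1 = 0" "(axis 2 1 :: real^4)$2 = 1" "(axis 2 1 :: real^4)$3 = 0" "(axis 2 1 :: real^4)$4 = 0"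
  "(axis 3 1 :: real^4)$1 = 0" "(axis 3 1 :: real^4)$2 = 0" "(axis 3 1 :: real^4)$3 = 1" "(axis 3 1 :: real^4)$4 = 0"
  "(axis 4 1 :: real^4)$1 = 0" "(axis 4 1 :: real^4)$2 = 0" "(axis 4 1 :: real^4)$3 = 0" "(axis 4 1 :: real^4)$4 = 1"
  by (simp_all add: axis_def)

lemma XK_eq: "NN x \<noteq> 0 \<Longrightarrow> XK \<mu> c x = GG \<mu> c x"
  unfolding XK_def GG_def by (simp add: pd_K axis_simps)


lemma cont_NN: "continuous_on UNIV NN"
  unfolding NN_def by (intro continuous_intros)

lemma good_pow: "good S f \<Longrightarrow> good S (\<lambda>x. f x ^ n)"
  by (induction n) (simp_all add: good_const good_mult)

lemma good_div_const: "good S f \<Longrightarrow> good S (\<lambda>x. f x / k)"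
  using good_mult[OF _ good_const, of S f "inverse k"] by (simp add: divide_inverse)

lemma GG_loc_lip:
  assumes "NN p \<noteq> 0"
  shows "\<exists>\<rho>>0. (\<forall>x\<in>cball p \<rho>. NN x \<noteq> 0) \<and>
     (\<exists>L. \<forall>x\<in>cball p \<rho>. \<forall>y\<in>cball p \<rho>. norm (GG \<mu> c x - GG \<mu> c y) \<le> L * norm (x - y))"
proof -
  have Np: "NN p > 0" using assms NN_nonneg[of p] by linarith
  have "open {x. NN p / 2 < NN x}"
    using cont_NN by (intro open_Collect_less continuous_intros) auto
  moreover have "p \<in> {x. NN p / 2 < NN x}" using Np by simp
  ultimately obtain \<rho> where \<rho>: "\<rho> > 0" "cball p \<rho> \<subseteq> {x. NN p / 2 < NN x}"
    using open_contains_cball by blast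
  define S where "S = cball p \<rho>"
  have bS: "bounded S" unfolding S_def by simp
  have lb: "\<forall>x\<in>S. NN p / 2 \<le> NN x" using \<rho> unfolding S_def by auto
  note gi = good_add good_diff good_mult good_const good_nth[OF bS] good_neg good_pow good_div_const
  have gN: "good S NN" unfolding NN_def by (intro gi)
  have giS: "good S iS" unfolding iS_def
    by (rule good_inv_sqrt[OF gN _ lb]) (use Np in simp)
  have grr: "good S rr" unfolding rr_def by (intro gi)
  have gNa: "good S Na" unfolding Na_def by (intro gi)
  have gNb: "good S Nb" unfolding Nb_def by (intro gi)
  note gi2 = gi giS grr gNa gNb
  have g1: "good S (g1 \<mu> c)" unfolding g1_def P1_def dS1_def by (intro gi2)
  have g2: "good S (g2 \<mu> c)" unfolding g2_def P2_def dS2_def by (intro gi2)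
  have g3: "good S (g3 \<mu>)" unfolding g3_def by (intro gi2)
  have g4: "good S (g4 \<mu>)" unfolding g4_def by (intro gi2)
  obtain L1 where L1: "\<forall>x\<in>S. \<forall>y\<in>S. \<bar>g1 \<mu> c x - g1 \<mu> c y\<bar> \<le> L1 * norm (x - y)" using g1 good_def by blast
  obtain L2 where L2: "\<forall>x\<in>S. \<forall>y\<in>S. \<bar>g2 \<mu> c x - g2 \<mu> c y\<bar> \<le> L2 * norm (x - y)" using g2 good_def by blast
  obtain L3 where L3: "\<forall>x\<in>S. \<forall>y\<in>S. \<bar>g3 \<mu> x - g3 \<mu> y\<bar> \<le> L3 * norm (x - y)" using g3 good_def by blast
  obtain L4 where L4: "\<forall>x\<in>S. \<forall>y\<in>S. \<bar>g4 \<mu> x - g4 \<mu> y\<bar> \<le> L4 * norm (x - y)" using g4 good_def by blast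
  have "\<forall>x\<in>S. \<forall>y\<in>S. norm (GG \<mu> c x - GG \<mu> c y) \<le> (L1 + L2 + L3 + L4) * norm (x - y)"
  proof (intro ballI)
    fix x y assume xy: "x \<in> S" "y \<in> S"
    have "norm (GG \<mu> c x - GG \<mu> c y) \<le> (\<Sum>i\<in>UNIV. \<bar>(GG \<mu> c x - GG \<mu> c y)$i\<bar>)"
      by (rule norm_le_l1_cart)
    also have "\<dots> = \<bar>g3 \<mu> x - g3 \<mu> y\<bar> + \<bar>g4 \<mu> x - g4 \<mu> y\<bar> + \<bar>g1 \<mu> c y - g1 \<mu> c x\<bar> + \<bar>g2 \<mu> c y - g2 \<mu> c x\<bar>"
      unfolding sum_4 GG_def by simp
    also have "\<dots> \<le> (L1 + L2 + L3 + L4) * norm (x - y)"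
      using L1 L2 L3 L4 xy by (smt (verit, best) abs_minus_commute distrib_right)
    finally show "norm (GG \<mu> c x - GG \<mu> c y) \<le> (L1 + L2 + L3 + L4) * norm (x - y)" .
  qed
  moreover have "\<forall>x\<in>cball p \<rho>. NN x \<noteq> 0" using \<rho> Np by fastforce
  ultimately show ?thesis using \<rho>(1) unfolding S_def by blast
qed



lemma gronwall0:
  fixes u u' :: "real \<Rightarrow> real"
  assumes d: "\<And>t. t \<in> ball t1 e \<Longrightarrow> (u has_real_derivative u' t) (at t)"
    and b: "\<And>t. t \<in> ball t1 e \<Longrightarrow> \<bar>u' t\<bar> \<le> C * u t"
    and nn: "\<And>t. u t \<ge> 0" and z: "u t1 = 0"
    and t: "t \<in> ball t1 e"
  shows "u t = 0"
proof (cases "t1 \<le> t")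
  case True
  define v where "v s = exp (- C * s) * u s" for s
  have "v t \<le> v t1"
  proof (rule DERIV_nonpos_imp_nonincreasing[OF True])
    fix s assume s: "t1 \<le> s" "s \<le> t"
    then have sb: "s \<in> ball t1 e" using t by (auto simp: dist_real_def)
    have "(v has_real_derivative exp (- C * s) * (- C) * u s + exp (- C * s) * u' s) (at s)"
      unfolding v_def by (rule derivative_eq_intros d[OF sb] refl)+ simp
    moreover have "exp (- C * s) * (- C) * u s + exp (- C * s) * u' s \<le> 0"
    proof -
      have "u' s - C * u s \<le> 0" using b[OF sb] by linarith
      then have "exp (- C * s) * (u' s - C * u s) \<le> 0" by (simp add: mult_nonneg_nonpos)
      then show ?thesis by (simp add: algebra_simps)
    qed
    ultimately show "\<exists>y. (v has_real_derivative y) (at s) \<and> y \<le> 0" by blast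
  qed
  then have "exp (- C * t) * u t \<le> 0" using z unfolding v_def by simp
  then have "u t \<le> 0" by (simp add: mult_le_0_iff)
  then show ?thesis using nn[of t] by linarith
next
  case False
  define v where "v s = exp (C * s) * u s" for s
  have "v t \<le> v t1"
  proof (rule DERIV_nonneg_imp_nondecreasing[of t t1 v])
    show "t \<le> t1" using False by simp
    fix s assume s: "t \<le> s" "s \<le> t1"
    then have sb: "s \<in> ball t1 e" using t by (auto simp: dist_real_def)
    have "(v has_real_derivative exp (C * s) * C * u s + exp (C * s) * u' s) (at s)"
      unfolding v_def by (rule derivative_eq_intros d[OF sb] refl)+ simp
    moreover have "exp (C * s) * C * u s + exp (C * s) * u' s \<ge> 0"
    proof -
      have "u' s + C * u s \<ge> 0" using b[OF sb] by linarith
      then have "exp (C * s) * (u' s + C * u s) \<ge> 0" by simp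
      then show ?thesis by (simp add: algebra_simps)
    qed
    ultimately show "\<exists>y. (v has_real_derivative y) (at s) \<and> y \<ge> 0" by blast
  qed
  then have "exp (C * t) * u t \<le> 0" using z unfolding v_def by simp
  then have "u t \<le> 0" by (simp add: mult_le_0_iff)
  then show ?thesis using nn[of t] by linarith
qed

lemma uniq:
  fixes F :: "real^4 \<Rightarrow> real^4" and U :: "(real^4) set"
  assumes loc: "\<forall>p\<in>U. \<exists>\<rho>>0. \<exists>L. \<forall>x\<in>cball p \<rho>. \<forall>y\<in>cball p \<rho>. norm (F x - F y) \<le> L * norm (x - y)"
    and y1: "\<And>t. (y1 has_vector_derivative F (y1 t)) (at t)"
    and y2: "\<And>t. (y2 has_vector_derivative F (y2 t)) (at t)"
    and inU: "\<And>t. y1 t \<in> U" and eq: "y1 a = y2 a"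
  shows "y1 t = y2 t"
proof -
  have c1: "\<And>t. continuous (at t) y1" using y1 has_vector_derivative_continuous by blast
  have c2: "\<And>t. continuous (at t) y2" using y2 has_vector_derivative_continuous by blast
  define E where "E = {t. y1 t = y2 t}"
  have "closed E" unfolding E_def
    by (intro closed_Collect_eq continuous_at_imp_continuous_on ballI c1 c2)
  moreover have "open E"
    unfolding open_contains_ball
  proof
    fix t1 assume "t1 \<in> E"
    then have t1: "y1 t1 = y2 t1" unfolding E_def by simp
    obtain \<rho> L where \<rho>: "\<rho> > 0" and L: "\<forall>x\<in>cball (y1 t1) \<rho>. \<forall>y\<in>cball (y1 t1) \<rho>. norm (F x - F y) \<le> L * norm (x - y)"
      using loc inU by blast
    obtain d1 where d1: "d1 > 0" "\<forall>t. dist t t1 < d1 \<longrightarrow> dist (y1 t) (y1 t1) < \<rho>"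
      using c1[of t1] \<rho> unfolding continuous_at_eps_delta by blast
    obtain d2 where d2: "d2 > 0" "\<forall>t. dist t t1 < d2 \<longrightarrow> dist (y2 t) (y2 t1) < \<rho>"
      using c2[of t1] \<rho> unfolding continuous_at_eps_delta by blast
    define e where "e = min d1 d2"
    have inb: "y1 t \<in> cball (y1 t1) \<rho> \<and> y2 t \<in> cball (y1 t1) \<rho>" if "t \<in> ball t1 e" for t
      using that d1 d2 t1 unfolding e_def by (auto simp: dist_commute less_imp_le)
    define u where "u t = inner (y1 t - y2 t) (y1 t - y2 t)" for t
    define u' where "u' t = 2 * inner (y1 t - y2 t) (F (y1 t) - F (y2 t))" for t
    have ud: "(u has_real_derivative u' t) (at t)" for t
    proof -
      have dd: "((\<lambda>t. y1 t - y2 t) has_vector_derivative (F (y1 t) - F (y2 t))) (at t)"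
        by (intro has_vector_derivative_diff y1 y2)
      have "((\<lambda>t. inner (y1 t - y2 t) (y1 t - y2 t)) has_vector_derivative
          (inner (y1 t - y2 t) (F (y1 t) - F (y2 t)) + inner (F (y1 t) - F (y2 t)) (y1 t - y2 t))) (at t)"
        by (rule bounded_bilinear.has_vector_derivative[OF bounded_bilinear_inner dd dd])
      then show ?thesis unfolding u_def u'_def has_real_derivative_iff_has_vector_derivative
        by (simp add: inner_commute)
    qed
    have ub: "\<bar>u' t\<bar> \<le> (2 * L) * u t" if "t \<in> ball t1 e" for t
    proof -
      have n: "norm (F (y1 t) - F (y2 t)) \<le> L * norm (y1 t - y2 t)" using L inb[OF that] by blast
      have "\<bar>u' t\<bar> \<le> 2 * (norm (y1 t - y2 t) * norm (F (y1 t) - F (y2 t)))"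
        unfolding u'_def using Cauchy_Schwarz_ineq2 by (simp add: abs_mult)
      also have "\<dots> \<le> 2 * (norm (y1 t - y2 t) * (L * norm (y1 t - y2 t)))"
        using n by (simp add: mult_left_mono)
      also have "\<dots> = (2 * L) * u t" unfolding u_def by (simp add: power2_norm_eq_inner[symmetric] power2_eq_square)
      finally show ?thesis .
    qed
    have "u t = 0" if "t \<in> ball t1 e" for t
      by (rule gronwall0[OF ud ub _ _ that]) (auto simp: u_def t1)
    then have "ball t1 e \<subseteq> E" unfolding E_def u_def by auto
    moreover have "e > 0" using d1 d2 unfolding e_def by simp
    ultimately show "\<exists>e>0. ball t1 e \<subseteq> E" by blast
  qed
  moreover have "a \<in> E" using eq unfolding E_def by simp
  ultimately have "E = UNIV" using clopen by blast
  then show ?thesis unfolding E_def by blast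
qed



lemma NN0_rr: assumes "NN x = 0" shows "rr x = 1/2"
proof -
  define A where "A = 2*(x$1)^2 - 2*(x$2)^2 - 1"
  define B where "B = 16*(x$1)^2*(x$2)^2"
  have N: "A^2 + B = 0" using assms unfolding NN_def A_def B_def .
  have "A^2 \<ge> 0" by simp
  moreover have "B \<ge> 0" unfolding B_def by simp
  ultimately have "A^2 = 0" "B = 0" using N by linarith+
  then have A0: "A = 0" and "x$1 = 0 \<or> x$2 = 0" unfolding B_def by simp_all
  moreover have "(x$2)^2 \<ge> 0" "(x$1)^2 \<ge> 0" by simp_all
  ultimately have "x$2 = 0"
  proof (elim disjE)
    assume "x$1 = 0"
    then have "- 2*(x$2)^2 - 1 = 0" using A0 unfolding A_def by simp
    then show ?thesis using \<open>(x$2)^2 \<ge> 0\<close> by linarith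
  qed
  then show ?thesis using A0 unfolding rr_def A_def by simp
qed

lemma aux_eq: fixes m P s :: real assumes "s > 0"
  shows "(m = P * s) \<longleftrightarrow> (P - m * inverse s = 0)"
proof -
  have "(P - m * inverse s = 0) \<longleftrightarrow> (P = m / s)" by (simp add: divide_inverse)
  also have "\<dots> \<longleftrightarrow> (P * s = m)" using assms by (simp add: eq_divide_eq)
  finally show ?thesis by auto
qed

lemma Q_iff:
  assumes "0 < \<mu>"
  shows "(\<mu> * rr x = PP \<mu> c x * sqrt (NN x)) \<longleftrightarrow> (NN x \<noteq> 0 \<and> K \<mu> c x = 0)"
proof (cases "NN x = 0")
  case True
  then show ?thesis using NN0_rr[OF True] assms by simp
next
  case False
  then have s: "sqrt (NN x) > 0" using NN_nonneg[of x] by simp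
  show ?thesis unfolding K_eq iS_def using False aux_eq[OF s] by simp
qed

lemma cont_rr: "continuous_on UNIV rr"
  unfolding rr_def by (intro continuous_intros)
lemma cont_PP: "continuous_on UNIV (PP \<mu> c)"
  unfolding PP_def rr_def by (intro continuous_intros) auto

lemma K_along:
  assumes sol: "(y has_vector_derivative XK \<mu> c (y s)) (at s)" and nz: "NN (y s) \<noteq> 0"
  shows "((\<lambda>t. K \<mu> c (y t)) has_real_derivative 0) (at s)"
proof -
  have ys: "(y has_derivative (\<lambda>h. h *\<^sub>R GG \<mu> c (y s))) (at s)"
    using sol XK_eq[OF nz] by (simp add: has_vector_derivative_def)
  have "((\<lambda>t. K \<mu> c (y t)) has_derivative (\<lambda>h. g1 \<mu> c (y s) * (h *\<^sub>R GG \<mu> c (y s))$1 + g2 \<mu> c (y s) * (h *\<^sub>R GG \<mu> c (y s))$2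
      + g3 \<mu> (y s) * (h *\<^sub>R GG \<mu> c (y s))$3 + g4 \<mu> (y s) * (h *\<^sub>R GG \<mu> c (y s))$4)) (at s)"
    by (rule has_derivative_compose[OF ys K_deriv[OF nz]])
  moreover have "(\<lambda>h. g1 \<mu> c (y s) * (h *\<^sub>R GG \<mu> c (y s))$1 + g2 \<mu> c (y s) * (h *\<^sub>R GG \<mu> c (y s))$2
      + g3 \<mu> (y s) * (h *\<^sub>R GG \<mu> c (y s))$3 + g4 \<mu> (y s) * (h *\<^sub>R GG \<mu> c (y s))$4) = (*) 0"
    by (rule ext) (simp add: GG_def algebra_simps)
  ultimately show ?thesis by (simp add: has_field_derivative_def)
qed

lemma invariant:
  assumes mu: "0 < \<mu>" and sol: "\<And>t. (y has_vector_derivative XK \<mu> c (y t)) (at t)"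
    and a: "NN (y a) \<noteq> 0" "K \<mu> c (y a) = 0"
  shows "NN (y t) \<noteq> 0 \<and> K \<mu> c (y t) = 0"
proof -
  have cy: "continuous_on UNIV y"
    using sol has_vector_derivative_continuous continuous_at_imp_continuous_on by blast
  define A where "A = {t. \<mu> * rr (y t) = PP \<mu> c (y t) * sqrt (NN (y t))}"
  have "closed A" unfolding A_def
    by (intro closed_Collect_eq continuous_intros continuous_on_compose2[OF cont_rr cy]
        continuous_on_compose2[OF cont_PP cy] continuous_on_compose2[OF cont_NN cy]) auto
  moreover have "open A"
    unfolding open_contains_ball
  proof
    fix t assume "t \<in> A"
    then have nt: "NN (y t) \<noteq> 0" "K \<mu> c (y t) = 0" using Q_iff[OF mu] unfolding A_def by auto
    have "open {s. 0 < NN (y s)}"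
      by (intro open_Collect_less continuous_intros continuous_on_compose2[OF cont_NN cy]) auto
    moreover have "t \<in> {s. 0 < NN (y s)}" using nt NN_nonneg[of "y t"] by simp
    ultimately obtain e where e: "e > 0" "ball t e \<subseteq> {s. 0 < NN (y s)}"
      using open_contains_ball by blast
    have "\<exists>k. \<forall>s\<in>ball t e. K \<mu> c (y s) = k"
    proof (rule has_field_derivative_zero_constant)
      fix s assume "s \<in> ball t e"
      then have "NN (y s) \<noteq> 0" using e by auto
      then show "((\<lambda>t. K \<mu> c (y t)) has_real_derivative 0) (at s within ball t e)"
        using K_along[OF sol] has_field_derivative_at_within by blast
    qed simp
    then obtain k where k: "\<forall>s\<in>ball t e. K \<mu> c (y s) = k" by blast
    then have "k = 0" using nt e by (metis centre_in_ball)
    then have "ball t e \<subseteq> A" unfolding A_def using k e Q_iff[OF mu] by fastforce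
    then show "\<exists>e>0. ball t e \<subseteq> A" using e by blast
  qed
  moreover have "a \<in> A" unfolding A_def using Q_iff[OF mu] a by simp
  ultimately have "A = UNIV" using clopen by blast
  then show ?thesis using Q_iff[OF mu] unfolding A_def by blast
qed



lemma Rplus_c[simp]: "Rplus x $ 1 = x$1" "Rplus x $ 2 = - x$2" "Rplus x $ 3 = - x$3" "Rplus x $ 4 = x$4"
  by (simp_all add: Rplus_def)
lemma Rminus_c[simp]: "Rminus x $ 1 = - x$1" "Rminus x $ 2 = x$2" "Rminus x $ 3 = x$3" "Rminus x $ 4 = - x$4"
  by (simp_all add: Rminus_def)

lemma vec4_eq: "(x::real^4) = y \<longleftrightarrow> x$1 = y$1 \<and> x$2 = y$2 \<and> x$3 = y$3 \<and> x$4 = y$4"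
  by (simp add: vec_eq_iff forall_4)

lemma lin_Rplus: "bounded_linear Rplus"
  by (rule linear_conv_bounded_linear[THEN iffD1], rule linearI) (simp_all add: vec4_eq)
lemma lin_Rminus: "bounded_linear Rminus"
  by (rule linear_conv_bounded_linear[THEN iffD1], rule linearI) (simp_all add: vec4_eq)

lemma Rp_h: "rr (Rplus x) = rr x" "NN (Rplus x) = NN x" "iS (Rplus x) = iS x" "Na (Rplus x) = Na x" "Nb (Rplus x) = - Nb x"
  by (simp_all add: rr_def NN_def iS_def Na_def Nb_def)
lemma Rp_h2: "dS1 (Rplus x) = dS1 x" "dS2 (Rplus x) = - dS2 x" "P1 \<mu> c (Rplus x) = P1 \<mu> c x" "P2 \<mu> c (Rplus x) = - P2 \<mu> c x"
  "g3 \<mu> (Rplus x) = - g3 \<mu> x" "g4 \<mu> (Rplus x) = g4 \<mu> x"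
  by (simp_all add: dS1_def dS2_def P1_def P2_def g3_def g4_def Rp_h algebra_simps)
lemma Rp_h3: "g1 \<mu> c (Rplus x) = g1 \<mu> c x" "g2 \<mu> c (Rplus x) = - g2 \<mu> c x"
  by (simp_all add: g1_def g2_def Rp_h Rp_h2 algebra_simps)
lemma Rm_h: "rr (Rminus x) = rr x" "NN (Rminus x) = NN x" "iS (Rminus x) = iS x" "Na (Rminus x) = - Na x" "Nb (Rminus x) = Nb x"
  by (simp_all add: rr_def NN_def iS_def Na_def Nb_def)
lemma Rm_h2: "dS1 (Rminus x) = - dS1 x" "dS2 (Rminus x) = dS2 x" "P1 \<mu> c (Rminus x) = - P1 \<mu> c x" "P2 \<mu> c (Rminus x) = P2 \<mu> c x"
  "g3 \<mu> (Rminus x) = g3 \<mu> x" "g4 \<mu> (Rminus x) = - g4 \<mu> x"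
  by (simp_all add: dS1_def dS2_def P1_def P2_def g3_def g4_def Rm_h algebra_simps)
lemma Rm_h3: "g1 \<mu> c (Rminus x) = - g1 \<mu> c x" "g2 \<mu> c (Rminus x) = g2 \<mu> c x"
  by (simp_all add: g1_def g2_def Rm_h Rm_h2 algebra_simps)

lemma sym_Rplus: "GG \<mu> c (Rplus x) = - Rplus (GG \<mu> c x)"
  by (simp add: vec4_eq GG_def Rp_h2 Rp_h3)
lemma sym_Rminus: "GG \<mu> c (Rminus x) = - Rminus (GG \<mu> c x)"
  by (simp add: vec4_eq GG_def Rm_h2 Rm_h3)
lemma NN_Rplus: "NN (Rplus x) = NN x" by (simp add: NN_def)
lemma NN_Rminus: "NN (Rminus x) = NN x" by (simp add: NN_def)

lemma refl_sol:
  assumes lin: "bounded_linear R" and sym: "\<And>x. GG \<mu> c (R x) = - R (GG \<mu> c x)"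
    and sol: "\<And>t. (y has_vector_derivative GG \<mu> c (y t)) (at t)"
  shows "((\<lambda>t. R (y (a - t))) has_vector_derivative GG \<mu> c (R (y (a - t)))) (at t)"
proof -
  have f: "((\<lambda>t. a - t) has_vector_derivative -1) (at t)"
    by (rule derivative_eq_intros refl)+ simp
  have ch: "((y \<circ> (\<lambda>t. a - t)) has_vector_derivative (-1) *\<^sub>R GG \<mu> c (y (a - t))) (at t)"
    by (rule vector_diff_chain_at[OF f sol])
  have neg: "R (- v) = - R v" for v
    using linear_scale[OF bounded_linear.linear[OF lin], of "-1" v] by simp
  from bounded_linear.has_vector_derivative[OF lin ch]
  show ?thesis by (simp add: o_def neg sym)
qed

lemma shift_sol:
  assumes sol: "\<And>t. (y has_vector_derivative F (y t)) (at t)"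
  shows "((\<lambda>t. y (a + t)) has_vector_derivative F (y (a + t))) (at t)"
proof -
  have f: "((\<lambda>t. a + t) has_vector_derivative 1) (at t)"
    by (rule derivative_eq_intros refl)+ simp
  have "((y \<circ> (\<lambda>t. a + t)) has_vector_derivative 1 *\<^sub>R F (y (a + t))) (at t)"
    by (rule vector_diff_chain_at[OF f sol])
  then show ?thesis by (simp add: o_def)
qed

lemma U_iff: "2 * (zc x)^2 = 1 \<longleftrightarrow> NN x = 0"
proof -
  have "2 * (zc x)^2 = 1 \<longleftrightarrow> cmod (2 * (zc x)^2 - 1) = 0" by simp
  also have "\<dots> \<longleftrightarrow> NN x = 0" unfolding cmod_eq using NN_nonneg[of x] by simp
  finally show ?thesis .
qed

lemma Sigma_sub: "Sigma \<mu> c \<subseteq> LC_level \<mu> c"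
  unfolding Sigma_def using connected_component_subset by blast



theorem lemma3p2:
  fixes \<mu> c :: real
    and Fl :: "real \<Rightarrow> real^4 \<Rightarrow> real^4"
    and g :: "real \<Rightarrow> real^4"
    and \<tau> :: "real^4 \<Rightarrow> real"
    and slope :: "real^4 \<Rightarrow> real"
    and p0 :: "real^4"
  assumes "0 < \<mu>" and "\<mu> < 1"
    and "below_critical \<mu> c"
    and "is_flow \<mu> c Fl"
    and "arc g" and "path_image g \<subseteq> C_plus \<mu> c"
    and "(first_hit_transverse \<mu> c Fl (S_minus \<mu> c) 1 (path_image g) \<tau> \<and>
           slope = (\<lambda>q. Fl (\<tau> q) q $ 4))
       \<or> (first_hit_transverse \<mu> c Fl (S_plus \<mu> c) 2 (path_image g) \<tau> \<and>
           slope = (\<lambda>q. Fl (\<tau> q) q $ 3))"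
    and "p0 \<in> path_image g" and "slope p0 = 0"
  shows "symmetric_periodic_point Fl p0"
proof -
  note mu = assms(1)
  have pC: "p0 \<in> C_plus \<mu> c" using assms(6,8) by blast
  then have pS: "p0 \<in> Sigma \<mu> c" and p23: "p0$2 = 0" "p0$3 = 0" unfolding C_plus_def by auto
  then have pL: "p0 \<in> LC_level \<mu> c" using Sigma_sub by blast
  then have pN: "NN p0 \<noteq> 0" and pK: "K \<mu> c p0 = 0" unfolding LC_level_def using U_iff by auto
  define x where "x t = Fl t p0" for t
  have x0: "x 0 = p0" and solXK: "\<And>t. (x has_vector_derivative XK \<mu> c (x t)) (at t)"
    using assms(4) pS unfolding is_flow_def x_def by auto
  have xN: "\<And>t. NN (x t) \<noteq> 0"
    using invariant[OF mu solXK, of 0] x0 pN pK by blast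
  have sol: "\<And>t. (x has_vector_derivative GG \<mu> c (x t)) (at t)"
    using solXK XK_eq[OF xN] by metis
  have loc: "\<forall>p\<in>{p. NN p \<noteq> 0}. \<exists>\<rho>>0. \<exists>L. \<forall>u\<in>cball p \<rho>. \<forall>v\<in>cball p \<rho>. norm (GG \<mu> c u - GG \<mu> c v) \<le> L * norm (u - v)"
    using GG_loc_lip by blast
  have Rp0: "Rplus p0 = p0" using p23 by (simp add: vec4_eq)
  have A: "Rplus (x (0 - t)) = x t" for t
  proof -
    have "x t = Rplus (x (0 - t))"
    proof (rule uniq[OF loc sol refl_sol[OF lin_Rplus sym_Rplus sol]])
      show "\<And>t. x t \<in> {p. NN p \<noteq> 0}" using xN by simp
      show "x 0 = Rplus (x (0 - 0))" using x0 Rp0 by simp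
    qed
    then show ?thesis by simp
  qed
  have xneg: "x (- t) = Rplus (x t)" for t
    using A[of "- t"] by simp
  define \<tau>0 where "\<tau>0 = \<tau> p0"
  have per: "\<exists>T>0. \<forall>t. x (t + T) = x t"
    using assms(7)
  proof (elim disjE conjE)
    assume fh: "first_hit_transverse \<mu> c Fl (S_minus \<mu> c) 1 (path_image g) \<tau>"
      and sl: "slope = (\<lambda>q. Fl (\<tau> q) q $ 4)"
    have tp: "\<tau>0 > 0" and hS: "x \<tau>0 \<in> S_minus \<mu> c"
      using fh assms(8) unfolding first_hit_transverse_def \<tau>0_def x_def by auto
    have h1: "x \<tau>0 $ 1 = 0" using hS unfolding S_minus_def by auto
    have h4: "x \<tau>0 $ 4 = 0" using assms(9) sl unfolding x_def \<tau>0_def by simp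
    have Rh: "Rminus (x \<tau>0) = x \<tau>0" using h1 h4 by (simp add: vec4_eq)
    have B: "x (\<tau>0 + t) = Rminus (x (\<tau>0 - t))" for t
    proof (rule uniq[OF loc shift_sol[OF sol] refl_sol[OF lin_Rminus sym_Rminus sol]])
      show "\<And>t. x (\<tau>0 + t) \<in> {p. NN p \<noteq> 0}" using xN by simp
      show "x (\<tau>0 + 0) = Rminus (x (\<tau>0 - 0))" using Rh by simp
    qed
    have half: "x (t + 2 * \<tau>0) = - x t" for t
    proof -
      have "x (t + 2 * \<tau>0) = x (\<tau>0 + (t + \<tau>0))" by (simp add: algebra_simps)
      also have "\<dots> = Rminus (x (- t))" using B[of "t + \<tau>0"] by simp
      also have "\<dots> = Rminus (Rplus (x t))" using xneg by simp
      also have "\<dots> = - x t" by (simp add: vec4_eq)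
      finally show ?thesis .
    qed
    have "x (t + 4 * \<tau>0) = x t" for t
      using half[of "t + 2 * \<tau>0"] half[of t] by (simp add: algebra_simps)
    then show ?thesis using tp by (intro exI[of _ "4 * \<tau>0"]) auto
  next
    assume fh: "first_hit_transverse \<mu> c Fl (S_plus \<mu> c) 2 (path_image g) \<tau>"
      and sl: "slope = (\<lambda>q. Fl (\<tau> q) q $ 3)"
    have tp: "\<tau>0 > 0" and hS: "x \<tau>0 \<in> S_plus \<mu> c"
      using fh assms(8) unfolding first_hit_transverse_def \<tau>0_def x_def by auto
    have h2: "x \<tau>0 $ 2 = 0" using hS unfolding S_plus_def by auto
    have h3: "x \<tau>0 $ 3 = 0" using assms(9) sl unfolding x_def \<tau>0_def by simp
    have Rh: "Rplus (x \<tau>0) = x \<tau>0" using h2 h3 by (simp add: vec4_eq)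
    have B: "x (\<tau>0 + t) = Rplus (x (\<tau>0 - t))" for t
    proof (rule uniq[OF loc shift_sol[OF sol] refl_sol[OF lin_Rplus sym_Rplus sol]])
      show "\<And>t. x (\<tau>0 + t) \<in> {p. NN p \<noteq> 0}" using xN by simp
      show "x (\<tau>0 + 0) = Rplus (x (\<tau>0 - 0))" using Rh by simp
    qed
    have "x (t + 2 * \<tau>0) = x t" for t
    proof -
      have "x (t + 2 * \<tau>0) = x (\<tau>0 + (t + \<tau>0))" by (simp add: algebra_simps)
      also have "\<dots> = Rplus (x (- t))" using B[of "t + \<tau>0"] by simp
      also have "\<dots> = Rplus (Rplus (x t))" using xneg by simp
      also have "\<dots> = x t" by (simp add: vec4_eq)
      finally show ?thesis .
    qed
    then show ?thesis using tp by (intro exI[of _ "2 * \<tau>0"]) auto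
  qed
  then obtain T where T: "T > 0" "\<And>t. x (t + T) = x t" by blast
  have "Rplus (x (T - t + 0)) = x (t + 0)" for t
  proof -
    have "Rplus (x (T - t)) = x (t - T)" using A[of "t - T"] by simp
    also have "\<dots> = x t" using T(2)[of "t - T"] by simp
    finally show ?thesis by simp
  qed
  then show ?thesis unfolding symmetric_periodic_point_def
    using T unfolding x_def by (intro exI[of _ T]) blast
qed


end
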